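(* Let $I\subseteq\mathbb R$ be an interval, $\lambda$ a positive measure on $(I\times\mathbb R^d,\mathcal B(I\times\mathbb R^d))$, $p\in[1,\infty)$, and for each $l\in\mathbb N$ let $G^{(l)}:(I\times\mathbb R^d)^2\to[0,\infty)$ be measurable with $G^{(l)}(t,x;s,y)=0$ whenever $s>t$. Let $f\in L^\infty_I$ be positive and assume $\theta:=\sup_{(t,x)\in I\times\mathbb R^d}\sum_{l=1}^\infty\big(\int_I\int_{\mathbb R^d}G^{(l)}(t,x;s,y)\lambda(ds,dy)\big)^{1/p}<\infty$. Let $\gamma\in(0,1)$ and let $v\ge0$ be a function with $v\in L^\infty_{I_T}$ for every $T\in I$ satisfying $v(t,x)\le f(t,x)+\big(\sum_{l=1}^\infty\int_I\int_{\mathbb R^d}G^{(l)}(t,x;s,y)v(s,y)^{p\gamma}\lambda(ds,dy)\big)^{1/p}$ for all $(t,x)\in I\times\mathbb R^d$. Then $v\in L^\infty_I$ and $\|v\|_{L^\infty_I}\le a$, where $a$ is the unique strictly positive solution of $a-\|f\|_{L^\infty_I}-\theta a^\gamma=0$.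
   Context: $I_T:=I\cap(-\infty,T]$. For $J\subseteq I$, $L^\infty_J$ is the space of measurable $f:J\times\mathbb R^d\to\mathbb R$ with $\|f\|_{L^\infty_J}:=\sup_{(t,x)\in J\times\mathbb R^d}|f(t,x)|<\infty$. "Positive" means $\ge0$. *)

theory Defs
  imports "HOL-Analysis.Analysis"
begin

definition Linf :: "real set \<Rightarrow> (real \<times> (real^'d) \<Rightarrow> real) \<Rightarrow> bool" where
  "Linf J f \<longleftrightarrow> f \<in> borel_measurable (restrict_space borel (J \<times> UNIV))
                 \<and> bounded (f ` (J \<times> UNIV))"

definition Linf_norm :: "real set \<Rightarrow> (real \<times> (real^'d) \<Rightarrow> real) \<Rightarrow> real" where
  "Linf_norm J f = (SUP z\<in>J \<times> UNIV. \<bar>f z\<bar>)"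

definition enn_root :: "real \<Rightarrow> ennreal \<Rightarrow> ennreal" where
  "enn_root p u = (if u = \<infinity> then \<infinity> else ennreal (enn2real u powr (1 / p)))"

end

theory Submission
  imports Defs
begin


lemma root_le:
  fixes F \<theta> \<gamma> M a :: real
  assumes F: "0 \<le> F" and th: "0 \<le> \<theta>" and g: "0 < \<gamma>" "\<gamma> < 1"
    and M: "0 \<le> M" "M \<le> F + \<theta> * M powr \<gamma>"
    and a: "a > 0" "a - F - \<theta> * a powr \<gamma> = 0"
  shows "M \<le> a"
proof (rule ccontr)
  assume "\<not> M \<le> a"
  hence Ma: "M > a" by simp
  define r where "r = M / a"
  have r1: "r > 1" using Ma a by (simp add: r_def)
  have Mr: "M = r * a" using a by (simp add: r_def)
  have "M powr \<gamma> = r powr \<gamma> * a powr \<gamma>" using Mr r1 a by (simp add: powr_mult)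
  hence "\<theta> * M powr \<gamma> = r powr \<gamma> * (\<theta> * a powr \<gamma>)" by (simp add: algebra_simps)
  also have "\<theta> * a powr \<gamma> = a - F" using a by simp
  finally have "\<theta> * M powr \<gamma> = r powr \<gamma> * (a - F)" .
  hence "r * a \<le> F + r powr \<gamma> * (a - F)" using M Mr by simp
  hence *: "a * (r - r powr \<gamma>) + F * (r powr \<gamma> - 1) \<le> 0" by (simp add: algebra_simps)
  have "r powr \<gamma> < r powr 1" using r1 g by (simp only: powr_less_cancel_iff)
  hence "r powr \<gamma> < r" using r1 by simp
  hence "a * (r - r powr \<gamma>) > 0" using a by simp
  moreover have "F * (r powr \<gamma> - 1) \<ge> 0" using F ge_one_powr_ge_zero[of r \<gamma>] r1 g by simp
  ultimately show False using * by linarith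
qed

lemma root_ex:
  fixes F \<theta> \<gamma> :: real
  assumes F: "0 \<le> F" and th: "0 \<le> \<theta>" and g: "0 < \<gamma>" "\<gamma> < 1" and pos: "F > 0 \<or> \<theta> > 0"
  shows "\<exists>a. a > 0 \<and> a - F - \<theta> * a powr \<gamma> = 0"
proof -
  define \<phi> where "\<phi> m = m - F - \<theta> * m powr \<gamma>" for m
  define b where "b = max 1 (max (2*F) ((2*\<theta>) powr (1/(1-\<gamma>))))"
  have b1: "b \<ge> 1" by (simp add: b_def)
  have "\<theta> * b powr \<gamma> \<le> b / 2"
  proof (cases "\<theta> = 0")
    case True then show ?thesis using b1 by simp
  next
    case False
    hence tp: "\<theta> > 0" using th by simp
    have "2 * \<theta> = ((2*\<theta>) powr (1/(1-\<gamma>))) powr (1 - \<gamma>)" using g tp by (simp add: powr_powr)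
    also have "\<dots> \<le> b powr (1 - \<gamma>)"
      by (rule powr_mono2) (use g b1 in \<open>auto simp: b_def\<close>)
    finally have h: "2 * \<theta> \<le> b powr (1 - \<gamma>)" .
    have "b = b powr \<gamma> * b powr (1 - \<gamma>)" using b1 by (simp add: powr_add[symmetric])
    hence "b \<ge> b powr \<gamma> * (2 * \<theta>)" using h b1 by (metis mult_left_mono powr_ge_zero)
    thus ?thesis by (simp add: algebra_simps)
  qed
  moreover have "F \<le> b / 2" by (simp add: b_def)
  ultimately have phb: "\<phi> b \<ge> 0" by (simp add: \<phi>_def)
  obtain e where e: "0 < e" "e \<le> b" "\<phi> e \<le> 0"
  proof (cases "F > 0")
    case True
    show ?thesis
      by (rule that[of "min 1 (F/2)"]) (use True b1 th in \<open>auto simp: \<phi>_def min_def intro!: add_nonneg_nonneg[of _ "\<theta> * _ powr \<gamma>", simplified] order.trans[OF _ mult_nonneg_nonneg[OF th powr_ge_zero]]\<close>)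
  next
    case False
    hence F0: "F = 0" and tp: "\<theta> > 0" using F pos by auto
    define e where "e = min 1 (\<theta> powr (1/(1-\<gamma>)) / 2)"
    have e0: "e > 0" using tp by (simp add: e_def)
    have "e \<le> \<theta> powr (1/(1-\<gamma>))" using tp powr_gt_zero[of \<theta> "1/(1-\<gamma>)"] unfolding e_def by linarith
    hence "e powr (1 - \<gamma>) \<le> (\<theta> powr (1/(1-\<gamma>))) powr (1 - \<gamma>)"
      using e0 g by (intro powr_mono2) auto
    also have "\<dots> = \<theta>" using g tp by (simp add: powr_powr)
    finally have h: "e powr (1 - \<gamma>) \<le> \<theta>" .
    have "e = e powr \<gamma> * e powr (1 - \<gamma>)" using e0 by (simp add: powr_add[symmetric])
    hence "e \<le> e powr \<gamma> * \<theta>" using h by (metis mult_left_mono powr_ge_zero)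
    show ?thesis
      by (rule that[of e]) (use e0 b1 F0 \<open>e \<le> e powr \<gamma> * \<theta>\<close> in \<open>auto simp: \<phi>_def e_def algebra_simps\<close>)
  qed
  have "continuous_on {e..b} \<phi>"
    unfolding \<phi>_def using e by (intro continuous_intros) auto
  then obtain a where "a \<in> {e..b}" "\<phi> a = 0" using IVT'[of \<phi> e 0 b] e phb by auto
  thus ?thesis using e by (auto simp: \<phi>_def intro!: exI[of _ a])
qed



lemma enn_root_key:
  fixes X Y :: "nat \<Rightarrow> ennreal" and p s c :: real
  assumes p: "1 \<le> p" and c: "0 \<le> c" and s: "0 \<le> s"
    and S: "(\<Sum>l. enn_root p (X l)) = ennreal s"
    and Y: "\<And>l. Y l \<le> X l * ennreal c"
  shows "enn_root p (\<Sum>l. Y l) \<le> ennreal (s * c powr (1/p))"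
proof -
  have fin: "enn_root p (X l) < top" for l
    using S ennreal_suminf_lessD[of "\<lambda>l. enn_root p (X l)" top l] by simp
  have Xfin: "X l \<noteq> \<infinity>" for l using fin[of l] unfolding enn_root_def by (cases "X l = top") simp_all
  define x where "x l = enn2real (X l)" for l
  define y where "y l = x l powr (1/p)" for l
  have x0: "0 \<le> x l" for l by (simp add: x_def)
  have y0: "0 \<le> y l" for l by (simp add: y_def)
  have Xx: "X l = ennreal (x l)" for l using Xfin[of l] by (simp add: x_def ennreal_enn2real_if)
  have ry: "enn_root p (X l) = ennreal (y l)" for l using Xfin[of l] by (simp add: enn_root_def y_def x_def)
  have Sy: "(\<Sum>l. ennreal (y l)) = ennreal s" using S ry by simp
  have sumy: "summable y" using Sy y0 by (intro summable_suminf_not_top) auto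
  have sy: "suminf y = s" using suminf_ennreal2[OF y0 sumy] Sy s suminf_nonneg[OF sumy y0] by (metis ennreal_inj)
  have yle: "y l \<le> s" for l using sum_le_suminf[OF sumy, of "{l}"] y0 sy by simp
  have xy: "x l \<le> y l * s powr (p - 1)" for l
  proof (cases "y l = 0")
    case True
    hence "x l = 0" using x0[of l] p by (simp add: y_def)
    thus ?thesis using True by simp
  next
    case False
    hence yp: "y l > 0" using y0[of l] by simp
    have "x l = y l powr p" using x0[of l] p by (simp add: y_def powr_powr)
    also have "\<dots> = y l * y l powr (p - 1)" using yp by (simp add: powr_mult_base)
    also have "\<dots> \<le> y l * s powr (p - 1)"
      using yp p yle[of l] by (intro mult_left_mono powr_mono2) auto
    finally show ?thesis .
  qed
  define K where "K = s powr (p - 1) * c"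
  have K0: "0 \<le> K" using c by (simp add: K_def)
  have "(\<Sum>l. Y l) \<le> (\<Sum>l. ennreal (y l * K))"
  proof (rule suminf_le[OF _ summableI summableI])
    fix l
    have "Y l \<le> ennreal (x l) * ennreal c" using Y Xx by simp
    also have "\<dots> = ennreal (x l * c)" using c x0 by (simp add: ennreal_mult)
    also have "\<dots> \<le> ennreal (y l * K)"
      using xy[of l] c unfolding K_def by (intro ennreal_leI) (simp add: mult_right_mono mult.assoc[symmetric])
    finally show "Y l \<le> ennreal (y l * K)" .
  qed
  also have "\<dots> = ennreal (\<Sum>l. y l * K)"
    by (rule suminf_ennreal2) (use y0 K0 summable_mult2[OF sumy] in auto)
  also have "(\<Sum>l. y l * K) = s * K" using suminf_mult2[OF sumy, of K] sy by simp
  finally have le: "(\<Sum>l. Y l) \<le> ennreal (s * K)" .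
  have sK: "s * K = s powr p * c"
  proof (cases "s = 0")
    case True thus ?thesis using p by (simp add: K_def)
  next
    case False thus ?thesis using s by (simp add: K_def powr_mult_base mult.assoc[symmetric])
  qed
  have nt: "(\<Sum>l. Y l) \<noteq> \<infinity>" using le ennreal_less_top[of "s * K"] by (metis infinity_ennreal_def neq_top_trans top.not_eq_extremum)
  have "enn_root p (\<Sum>l. Y l) = ennreal (enn2real (\<Sum>l. Y l) powr (1/p))" using nt by (simp add: enn_root_def)
  also have "\<dots> \<le> ennreal ((s * K) powr (1/p))"
    using le nt s K0 p by (intro ennreal_leI powr_mono2) (auto simp: enn2real_leI)
  also have "(s * K) powr (1/p) = s * c powr (1/p)"
    using s c p by (simp add: sK powr_mult powr_powr)
  finally show ?thesis .
qed

lemma interval_times_borel: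
  fixes J :: "real set"
  assumes "is_interval J"
  shows "J \<times> (UNIV :: ('b::second_countable_topology) set) \<in> sets (borel :: (real \<times> 'b) measure)"
proof -
  have "J \<times> (UNIV :: 'b set) \<in> sets (borel \<Otimes>\<^sub>M borel)"
    using real_interval_borel_measurable[OF assms] by (intro pair_measureI) auto
  thus ?thesis by (metis borel_prod)
qed

lemma glue_measurable:
  fixes I :: "real set" and v :: "real \<times> 'b::second_countable_topology \<Rightarrow> real"
  assumes I: "is_interval I"
    and v: "\<And>T. T \<in> I \<Longrightarrow> v \<in> borel_measurable (restrict_space borel ((I \<inter> {..T}) \<times> UNIV))"
  shows "v \<in> borel_measurable (restrict_space borel (I \<times> UNIV))"
proof -
  define D where "D = (\<rat> \<inter> I) \<union> {t\<in>I. \<forall>s\<in>I. s \<le> t}"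
  define C where "C = (\<lambda>T. (I \<inter> {..T}) \<times> (UNIV :: 'b set)) ` D"
  have "{t\<in>I. \<forall>s\<in>I. s \<le> t} \<subseteq> {Sup I}"
    by (auto intro!: cSup_eq_maximum[symmetric])
  hence "countable {t\<in>I. \<forall>s\<in>I. s \<le> t}" by (rule countable_subset) simp
  hence cD: "countable D" unfolding D_def using countable_rat by blast
  have DI: "D \<subseteq> I" by (auto simp: D_def)
  have IB: "I \<times> (UNIV :: 'b set) \<in> sets borel" by (rule interval_times_borel[OF I])
  have iT: "is_interval (I \<inter> {..T})" for T using I by (simp add: is_interval_Int is_interval_ic)
  show ?thesis
  proof (rule measurable_piecewise_restrict[of C])
    show "countable C" using cD by (simp add: C_def)
  next
    fix \<Omega> assume "\<Omega> \<in> C"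
    then obtain T where T: "T \<in> D" "\<Omega> = (I \<inter> {..T}) \<times> UNIV" by (auto simp: C_def)
    have "\<Omega> \<inter> space (restrict_space borel (I \<times> UNIV)) = \<Omega>" using T by (auto simp: space_restrict_space)
    moreover have "\<Omega> \<in> sets (restrict_space borel (I \<times> UNIV))"
      using T IB interval_times_borel[OF iT[of T], where 'b='b] by (subst sets_restrict_space_iff) auto
    ultimately show "\<Omega> \<inter> space (restrict_space borel (I \<times> UNIV)) \<in> sets (restrict_space borel (I \<times> UNIV))"
      by simp
    have "restrict_space (restrict_space borel (I \<times> UNIV)) \<Omega> = restrict_space borel ((I \<times> UNIV) \<inter> \<Omega>)"
      using T IB interval_times_borel[OF iT[of T], where 'b='b] by (intro restrict_restrict_space) auto
    also have "(I \<times> UNIV) \<inter> \<Omega> = \<Omega>" using T by auto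
    finally show "v \<in> borel_measurable (restrict_space (restrict_space borel (I \<times> UNIV)) \<Omega>)"
      using v[of T] T DI by auto
  next
    show "space (restrict_space borel (I \<times> UNIV)) \<subseteq> \<Union>C"
    proof
      fix z assume "z \<in> space (restrict_space borel (I \<times> (UNIV :: 'b set)))"
      then obtain t x where z: "z = (t, x)" "t \<in> I" by (auto simp: space_restrict_space)
      have "\<exists>T\<in>D. t \<le> T"
      proof (cases "\<forall>s\<in>I. s \<le> t")
        case True thus ?thesis using z by (auto simp: D_def)
      next
        case False
        then obtain s where s: "s \<in> I" "t < s" by force
        obtain q where q: "q \<in> \<rat>" "t < q" "q < s" using Rats_dense_in_real[OF s(2)] by blast
        have "q \<in> I" using I z(2) s(1) q unfolding is_interval_1 by (meson less_imp_le)
        thus ?thesis using q by (auto simp: D_def intro!: bexI[of _ q])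
      qed
      thus "z \<in> \<Union>C" using z by (auto simp: C_def)
    qed
  qed
qed

theorem mainTheorem13:
  fixes I :: "real set"
    and lam :: "(real \<times> (real^'d)) measure"
    and p \<gamma> :: real
    and G :: "nat \<Rightarrow> real \<times> (real^'d) \<Rightarrow> real \<times> (real^'d) \<Rightarrow> real"
    and f v :: "real \<times> (real^'d) \<Rightarrow> real"
  assumes I_int: "is_interval I" and I_ne: "I \<noteq> {}"
    and lam: "sets lam = sets borel"
    and p: "1 \<le> p"
    and G_meas: "\<And>l. (\<lambda>(z, w). G l z w) \<in> borel_measurable borel"
    and G_nonneg: "\<And>l t x s y. t \<in> I \<Longrightarrow> s \<in> I \<Longrightarrow> 0 \<le> G l (t, x) (s, y)"
    and G_causal: "\<And>l t x s y. t \<in> I \<Longrightarrow> s \<in> I \<Longrightarrow> s > t \<Longrightarrow> G l (t, x) (s, y) = 0"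
    and f_Linf: "Linf I f" and f_pos: "\<And>z. z \<in> I \<times> UNIV \<Longrightarrow> 0 \<le> f z"
    and theta_fin: "(SUP z\<in>I \<times> UNIV. (\<Sum>l. enn_root p (\<integral>\<^sup>+ w\<in>I \<times> UNIV. ennreal (G l z w) \<partial>lam))) < \<infinity>"
    and \<gamma>: "0 < \<gamma>" "\<gamma> < 1"
    and v_nonneg: "\<And>z. z \<in> I \<times> UNIV \<Longrightarrow> 0 \<le> v z"
    and v_loc: "\<And>T. T \<in> I \<Longrightarrow> Linf (I \<inter> {..T}) v"
    and v_ineq: "\<And>z. z \<in> I \<times> UNIV \<Longrightarrow>
        ennreal (v z) \<le> ennreal (f z) +
          enn_root p (\<Sum>l. \<integral>\<^sup>+ w\<in>I \<times> UNIV. ennreal (G l z w * v w powr (p * \<gamma>)) \<partial>lam)"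
  shows "Linf I v \<and>
    (let \<theta> = enn2real (SUP z\<in>I \<times> UNIV. (\<Sum>l. enn_root p (\<integral>\<^sup>+ w\<in>I \<times> UNIV. ennreal (G l z w) \<partial>lam)))
     in ((Linf_norm I f > 0 \<or> \<theta> > 0) \<longrightarrow>
           (\<exists>!a. a > 0 \<and> a - Linf_norm I f - \<theta> * a powr \<gamma> = 0))
      \<and> (\<forall>a. a > 0 \<and> a - Linf_norm I f - \<theta> * a powr \<gamma> = 0 \<longrightarrow> Linf_norm I v \<le> a))"
proof -
  define \<theta>e where "\<theta>e = (SUP z\<in>I \<times> UNIV. (\<Sum>l. enn_root p (\<integral>\<^sup>+ w\<in>I \<times> UNIV. ennreal (G l z w) \<partial>lam)))"
  define \<theta> where "\<theta> = enn2real \<theta>e"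
  define F where "F = Linf_norm I f"
  have "\<theta>e < top" using theta_fin by (simp only: \<theta>e_def infinity_ennreal_def)
  hence \<theta>e: "\<theta>e = ennreal \<theta>" unfolding \<theta>_def by (rule ennreal_enn2real[symmetric])
  have \<theta>0: "0 \<le> \<theta>" by (simp add: \<theta>_def)
  obtain Bf where Bf: "\<And>z. z \<in> I \<times> UNIV \<Longrightarrow> \<bar>f z\<bar> \<le> Bf"
    using f_Linf unfolding Linf_def bounded_iff by auto
  have fF: "f z \<le> F" if "z \<in> I \<times> UNIV" for z
  proof -
    have "\<bar>f z\<bar> \<le> F" unfolding F_def Linf_norm_def
      by (rule cSUP_upper[OF that]) (use Bf in \<open>auto intro!: bdd_aboveI2\<close>)
    thus ?thesis by simp
  qed
  obtain t0 where t0: "t0 \<in> I" using I_ne by auto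
  have F0: "0 \<le> F" using fF[of "(t0, 0)"] f_pos[of "(t0, 0)"] t0 by auto
  have Sz: "\<exists>s. 0 \<le> s \<and> s \<le> \<theta> \<and> (\<Sum>l. enn_root p (\<integral>\<^sup>+ w\<in>I \<times> UNIV. ennreal (G l z w) \<partial>lam)) = ennreal s"
    if z: "z \<in> I \<times> UNIV" for z
  proof -
    have le: "(\<Sum>l. enn_root p (\<integral>\<^sup>+ w\<in>I \<times> UNIV. ennreal (G l z w) \<partial>lam)) \<le> ennreal \<theta>"
      unfolding \<theta>e[symmetric] \<theta>e_def by (rule SUP_upper[OF z])
    hence "(\<Sum>l. enn_root p (\<integral>\<^sup>+ w\<in>I \<times> UNIV. ennreal (G l z w) \<partial>lam)) < top"
      using ennreal_less_top order.strict_trans1 by blast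
    then obtain s where s: "s \<ge> 0" "(\<Sum>l. enn_root p (\<integral>\<^sup>+ w\<in>I \<times> UNIV. ennreal (G l z w) \<partial>lam)) = ennreal s"
      unfolding less_top_ennreal by blast
    have "s \<le> \<theta>" using le s \<theta>0 by (simp add: ennreal_le_iff)
    thus ?thesis using s by blast
  qed
  define M where "M T = (SUP z\<in>(I \<inter> {..T}) \<times> UNIV. v z)" for T
  have Mbd: "bdd_above (v ` ((I \<inter> {..T}) \<times> UNIV))" if "T \<in> I" for T
    using v_loc[OF that] unfolding Linf_def by (auto intro: bounded_imp_bdd_above)
  have vM: "v z \<le> M T" if "T \<in> I" "z \<in> (I \<inter> {..T}) \<times> UNIV" for T z
    unfolding M_def by (rule cSUP_upper[OF that(2) Mbd[OF that(1)]])
  have M0: "0 \<le> M T" if "T \<in> I" for T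
    using vM[OF that, of "(T, 0)"] v_nonneg[of "(T, 0)"] that by auto
  have Gm: "(\<lambda>w. ennreal (G l z w) * indicator (I \<times> UNIV) w) \<in> borel_measurable lam" for l z
  proof -
    have "(\<lambda>w. (z, w)) \<in> borel_measurable borel"
      by (intro borel_measurable_continuous_onI continuous_intros)
    from measurable_compose[OF this G_meas[of l]]
    have g: "(\<lambda>w. G l z w) \<in> borel_measurable borel" by simp
    have IB: "I \<times> (UNIV :: (real^'d) set) \<in> sets borel" by (rule interval_times_borel[OF I_int])
    have "(\<lambda>w. ennreal (G l z w) * indicator (I \<times> UNIV) w) \<in> borel_measurable borel"
    proof -
      have g1: "(\<lambda>w. ennreal (G l z w)) \<in> borel_measurable borel"
        by (rule measurable_compose[OF g measurable_ennreal])
      have g2: "(indicator (I \<times> UNIV) :: real \<times> (real^'d) \<Rightarrow> ennreal) \<in> borel_measurable borel"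
        by (rule borel_measurable_indicator[OF IB])
      show ?thesis by (rule borel_measurable_times_ennreal[OF g1 g2])
    qed
    thus ?thesis by (subst measurable_cong_sets[OF lam refl])
  qed
  have Mineq: "M T \<le> F + \<theta> * M T powr \<gamma>" if T: "T \<in> I" for T
  proof -
  have "(SUP z\<in>(I \<inter> {..T}) \<times> UNIV. v z) \<le> F + \<theta> * M T powr \<gamma>"
  proof (rule cSUP_least)
    show "(I \<inter> {..T}) \<times> (UNIV :: (real^'d) set) \<noteq> {}" using T by auto
  next
    fix z assume zT: "z \<in> (I \<inter> {..T}) \<times> (UNIV :: (real^'d) set)"
    then obtain t x where zx: "z = (t, x)" "t \<in> I" "t \<le> T" by auto
    have z: "z \<in> I \<times> UNIV" using zx by auto
    obtain s where s: "0 \<le> s" "s \<le> \<theta>"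
      "(\<Sum>l. enn_root p (\<integral>\<^sup>+ w\<in>I \<times> UNIV. ennreal (G l z w) \<partial>lam)) = ennreal s"
      using Sz[OF z] by blast
    define c where "c = M T powr (p * \<gamma>)"
    have c0: "0 \<le> c" by (simp add: c_def)
    have Y: "(\<integral>\<^sup>+ w\<in>I \<times> UNIV. ennreal (G l z w * v w powr (p * \<gamma>)) \<partial>lam)
        \<le> (\<integral>\<^sup>+ w\<in>I \<times> UNIV. ennreal (G l z w) \<partial>lam) * ennreal c" for l
    proof -
      have "(\<integral>\<^sup>+ w\<in>I \<times> UNIV. ennreal (G l z w * v w powr (p * \<gamma>)) \<partial>lam)
          \<le> (\<integral>\<^sup>+ w. ennreal (G l z w) * indicator (I \<times> UNIV) w * ennreal c \<partial>lam)"
      proof (rule nn_integral_mono)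
        fix w :: "real \<times> (real^'d)"
        show "ennreal (G l z w * v w powr (p * \<gamma>)) * indicator (I \<times> UNIV) w
              \<le> ennreal (G l z w) * indicator (I \<times> UNIV) w * ennreal c"
        proof (cases "w \<in> I \<times> UNIV")
          case False thus ?thesis by simp
        next
          case True
          then obtain s' y where w: "w = (s', y)" "s' \<in> I" by auto
          show ?thesis
          proof (cases "s' > t")
            case True
            thus ?thesis using G_causal[OF zx(2) w(2) True] zx w by simp
          next
            case False
            hence "w \<in> (I \<inter> {..T}) \<times> UNIV" using w zx by auto
            hence vw: "v w \<le> M T" using vM[OF T] by blast
            have v0: "0 \<le> v w" using v_nonneg \<open>w \<in> I \<times> UNIV\<close> by blast
            have G0: "0 \<le> G l z w" using G_nonneg[OF zx(2) w(2)] zx w by simp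
            have "v w powr (p * \<gamma>) \<le> c" unfolding c_def
              using vw v0 p \<gamma> by (intro powr_mono2) auto
            hence "G l z w * v w powr (p * \<gamma>) \<le> G l z w * c" using G0 by (rule mult_left_mono)
            hence "ennreal (G l z w * v w powr (p * \<gamma>)) \<le> ennreal (G l z w) * ennreal c"
              using G0 c0 by (simp add: ennreal_mult[symmetric] ennreal_leI)
            thus ?thesis using \<open>w \<in> I \<times> UNIV\<close> by simp
          qed
        qed
      qed
      also have "\<dots> = (\<integral>\<^sup>+ w\<in>I \<times> UNIV. ennreal (G l z w) \<partial>lam) * ennreal c"
        by (rule nn_integral_multc[OF Gm])
      finally show ?thesis .
    qed
    have key: "enn_root p (\<Sum>l. \<integral>\<^sup>+ w\<in>I \<times> UNIV. ennreal (G l z w * v w powr (p * \<gamma>)) \<partial>lam)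
        \<le> ennreal (s * c powr (1/p))"
      by (rule enn_root_key[OF p c0 s(1) s(3) Y])
    have cp: "c powr (1/p) = M T powr \<gamma>" using p by (simp add: c_def powr_powr)
    have "ennreal (v z) \<le> ennreal (f z) +
          enn_root p (\<Sum>l. \<integral>\<^sup>+ w\<in>I \<times> UNIV. ennreal (G l z w * v w powr (p * \<gamma>)) \<partial>lam)"
      by (rule v_ineq[OF z])
    also have "\<dots> \<le> ennreal (f z) + ennreal (s * c powr (1/p))"
      using key by (rule add_left_mono)
    also have "\<dots> = ennreal (f z + s * M T powr \<gamma>)"
      using f_pos[OF z] s by (simp add: ennreal_plus cp)
    finally have h: "ennreal (v z) \<le> ennreal (f z + s * M T powr \<gamma>)" .
    have nn: "0 \<le> f z + s * M T powr \<gamma>" using f_pos[OF z] s by simp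
    have "v z \<le> f z + s * M T powr \<gamma>" using h ennreal_le_iff[OF nn] by blast
    also have "\<dots> \<le> F + \<theta> * M T powr \<gamma>"
      using fF[OF z] s by (intro add_mono mult_right_mono) auto
    finally show "v z \<le> F + \<theta> * M T powr \<gamma>" .
  qed
  thus ?thesis by (simp only: M_def)
  qed
  have Mle: "M T \<le> a" if "T \<in> I" "a > 0" "a - F - \<theta> * a powr \<gamma> = 0" for T a
    by (rule root_le[OF F0 \<theta>0 \<gamma> M0[OF that(1)] Mineq[OF that(1)] that(2,3)])
  obtain B where B: "\<And>T. T \<in> I \<Longrightarrow> M T \<le> B"
  proof (cases "F > 0 \<or> \<theta> > 0")
    case True
    then obtain a where "a > 0" "a - F - \<theta> * a powr \<gamma> = 0" using root_ex[OF F0 \<theta>0 \<gamma>] by blast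
    thus ?thesis using Mle that by blast
  next
    case False
    hence "F = 0" "\<theta> = 0" using F0 \<theta>0 by auto
    thus ?thesis using Mineq that[of 0] by auto
  qed
  have vMz: "v z \<le> M (fst z)" if "z \<in> I \<times> UNIV" for z
    using vM[of "fst z" z] that by (cases z) auto
  have bv: "bounded (v ` (I \<times> UNIV))"
    unfolding bounded_iff
  proof (intro exI ballI)
    fix y assume "y \<in> v ` (I \<times> UNIV)"
    then obtain z where z: "z \<in> I \<times> UNIV" "y = v z" by auto
    show "norm y \<le> B" using z vMz[OF z(1)] B[of "fst z"] v_nonneg[OF z(1)] by auto
  qed
  have mv: "v \<in> borel_measurable (restrict_space borel (I \<times> UNIV))"
    by (rule glue_measurable[OF I_int]) (use v_loc in \<open>auto simp: Linf_def\<close>)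
  have L: "Linf I v" using mv bv by (simp add: Linf_def)
  have uniq: "\<exists>!a. a > 0 \<and> a - F - \<theta> * a powr \<gamma> = 0" if pos: "F > 0 \<or> \<theta> > 0"
  proof -
    obtain a where a: "a > 0" "a - F - \<theta> * a powr \<gamma> = 0" using root_ex[OF F0 \<theta>0 \<gamma> pos] by blast
    show ?thesis
    proof (rule ex1I[of _ a])
      show "a > 0 \<and> a - F - \<theta> * a powr \<gamma> = 0" using a by simp
    next
      fix b assume b: "b > 0 \<and> b - F - \<theta> * b powr \<gamma> = 0"
      have "b \<le> a" by (rule root_le[OF F0 \<theta>0 \<gamma>]) (use b a in auto)
      moreover have "a \<le> b" by (rule root_le[OF F0 \<theta>0 \<gamma>]) (use b a in auto)
      ultimately show "b = a" by simp
    qed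
  qed
  have nv: "Linf_norm I v \<le> a" if "a > 0" "a - F - \<theta> * a powr \<gamma> = 0" for a
    unfolding Linf_norm_def
  proof (rule cSUP_least)
    show "I \<times> (UNIV :: (real^'d) set) \<noteq> {}" using I_ne by auto
  next
    fix z assume z: "z \<in> I \<times> (UNIV :: (real^'d) set)"
    show "\<bar>v z\<bar> \<le> a" using vMz[OF z] Mle[of "fst z" a] that v_nonneg[OF z] z by auto
  qed
  have eq: "enn2real (SUP z\<in>I \<times> UNIV. (\<Sum>l. enn_root p (\<integral>\<^sup>+ w\<in>I \<times> UNIV. ennreal (G l z w) \<partial>lam))) = \<theta>"
    by (simp only: \<theta>_def \<theta>e_def)
  show ?thesis
    unfolding Let_def eq F_def[symmetric] using L uniq nv by blast
qed


end
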